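(* Let $(S_1,\dots,S_{n-1},P)$ be a $\Gamma_n$-contraction on a Hilbert space $\mathcal H$ such that $P$ is invertible. Let $(A_1,\dots,A_{n-1})$ be its fundamental operator tuple and $(B_1,\dots,B_{n-1})$ the fundamental operator tuple of $(S_1^*,\dots,S_{n-1}^*,P^* )$. Then $[A_i,A_{n-i}]=0$ for all $i=1,\dots,n-1$ if and only if $[B_i,B_{n-i}]=0$ for all $i=1,\dots,n-1$.
   Context: $[X,Y]=XY-YX$. $\Gamma_n=\pi_n(\overline{\mathbb D}^n)$ with $\pi_n$ the symmetrization map. A $\Gamma_n$-contraction is a commuting tuple with Taylor joint spectrum in $\Gamma_n$ and $\|f(\cdot)\|\le\sup_{\Gamma_n}|f|$ for polynomials. $D_T=(I-T^*T)^{1/2}$, $\mathcal D_T=\overline{\operatorname{Ran}}D_T$. The fundamental operator tuple of a $\Gamma_n$-contraction $(S_1,\dots,S_{n-1},P)$ is the unique $(F_1,\dots,F_{n-1})$ in $\mathcal B(\mathcal D_P)$ with $S_i-S_{n-i}^*P=D_PF_iD_P$. *)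

theory Defs
  imports "HOL-Analysis.Analysis"
begin

text \<open>The distribution has no complex inner product spaces, so we introduce the class
of complex Hilbert spaces: a real Banach space carrying a complex scalar multiplication
compatible with the real one and a complex inner product (linear in the second,
conjugate-linear in the first argument) that induces the norm.\<close>

class chilbert = banach +
  fixes scaleC :: "complex \<Rightarrow> 'a \<Rightarrow> 'a" (infixr "*\<^sub>C" 75)
    and cinner :: "'a \<Rightarrow> 'a \<Rightarrow> complex"
  assumes scaleC_add_right: "a *\<^sub>C (x + y) = a *\<^sub>C x + a *\<^sub>C y"
    and scaleC_add_left: "(a + b) *\<^sub>C x = a *\<^sub>C x + b *\<^sub>C x"
    and scaleC_scaleC: "a *\<^sub>C (b *\<^sub>C x) = (a * b) *\<^sub>C x"
    and scaleC_one: "1 *\<^sub>C x = x"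
    and scaleR_scaleC: "scaleR r x = complex_of_real r *\<^sub>C x"
    and cinner_add_left: "cinner (x + y) z = cinner x z + cinner y z"
    and cinner_scaleC_left: "cinner (a *\<^sub>C x) y = cnj a * cinner x y"
    and cinner_commute: "cinner x y = cnj (cinner y x)"
    and cinner_nonneg: "0 \<le> Re (cinner x x)"
    and cinner_zero: "cinner x x = 0 \<Longrightarrow> x = 0"
    and norm_cinner: "norm x = sqrt (Re (cinner x x))"

definition bounded_clinear :: "('a::chilbert \<Rightarrow> 'a) \<Rightarrow> bool" where
  "bounded_clinear T \<longleftrightarrow> bounded_linear T \<and> (\<forall>c x. T (c *\<^sub>C x) = c *\<^sub>C T x)"

definition adjoint :: "('a::chilbert \<Rightarrow> 'a) \<Rightarrow> ('a \<Rightarrow> 'a)" where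
  "adjoint T = (THE T'. \<forall>x y. cinner (T x) y = cinner x (T' y))"

definition positive_op :: "('a::chilbert \<Rightarrow> 'a) \<Rightarrow> bool" where
  "positive_op A \<longleftrightarrow> bounded_clinear A \<and>
     (\<forall>x. Im (cinner x (A x)) = 0 \<and> 0 \<le> Re (cinner x (A x)))"

definition op_sqrt :: "('a::chilbert \<Rightarrow> 'a) \<Rightarrow> ('a \<Rightarrow> 'a)" where
  "op_sqrt A = (THE R. positive_op R \<and> R \<circ> R = A)"

definition defect_op :: "('a::chilbert \<Rightarrow> 'a) \<Rightarrow> ('a \<Rightarrow> 'a)" where
  "defect_op T = op_sqrt (\<lambda>x. x - adjoint T (T x))"

definition defect_space :: "('a::chilbert \<Rightarrow> 'a) \<Rightarrow> 'a set" where
  "defect_space T = closure (range (defect_op T))"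

definition invertible_op :: "('a::chilbert \<Rightarrow> 'a) \<Rightarrow> bool" where
  "invertible_op P \<longleftrightarrow> bounded_clinear P \<and>
     (\<exists>Q. bounded_clinear Q \<and> P \<circ> Q = id \<and> Q \<circ> P = id)"

definition esym :: "nat \<Rightarrow> nat \<Rightarrow> (nat \<Rightarrow> complex) \<Rightarrow> complex" where
  "esym n k z = (\<Sum>K \<in> {K. K \<subseteq> {1..n} \<and> card K = k}. \<Prod>j\<in>K. z j)"

text \<open>A point of \<open>\<complex>^n\<close> is written \<open>(s, p)\<close> with \<open>s\<close> carrying the coordinates
\<open>1..n-1\<close> and \<open>p\<close> the last coordinate; \<open>\<pi>_n(z) = (s_1(z),...,s_{n-1}(z), s_n(z))\<close>.\<close>
definition Gamma :: "nat \<Rightarrow> ((nat \<Rightarrow> complex) \<times> complex) set" where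
  "Gamma n = {((\<lambda>i. if i \<in> {1..n-1} then esym n i z else 0), esym n n z) | z.
               \<forall>j\<in>{1..n}. cmod (z j) \<le> 1}"

text \<open>A polynomial in the variables \<open>(s_1,...,s_{n-1},p)\<close> is a finitely supported
coefficient function on multi-indices; \<open>\<alpha> i\<close> for \<open>i\<in>{1..n-1}\<close> is the exponent
of \<open>s_i\<close> and \<open>\<alpha> n\<close> that of \<open>p\<close>.\<close>
definition is_poly :: "nat \<Rightarrow> ((nat \<Rightarrow> nat) \<Rightarrow> complex) \<Rightarrow> bool" where
  "is_poly n c \<longleftrightarrow> finite {\<alpha>. c \<alpha> \<noteq> 0} \<and>
     (\<forall>\<alpha>. c \<alpha> \<noteq> 0 \<longrightarrow> (\<forall>i. i \<notin> {1..n} \<longrightarrow> \<alpha> i = 0))"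

definition poly_eval :: "nat \<Rightarrow> ((nat \<Rightarrow> nat) \<Rightarrow> complex) \<Rightarrow> (nat \<Rightarrow> complex) \<Rightarrow> complex \<Rightarrow> complex" where
  "poly_eval n c s p = (\<Sum>\<alpha>\<in>{\<alpha>. c \<alpha> \<noteq> 0}. c \<alpha> * (\<Prod>i\<in>{1..n-1}. s i ^ \<alpha> i) * p ^ \<alpha> n)"

definition op_monomial :: "nat \<Rightarrow> (nat \<Rightarrow> 'a \<Rightarrow> 'a) \<Rightarrow> ('a \<Rightarrow> 'a) \<Rightarrow> (nat \<Rightarrow> nat) \<Rightarrow> ('a \<Rightarrow> 'a)" where
  "op_monomial n S P \<alpha> = foldr (\<lambda>i acc. (S i ^^ \<alpha> i) \<circ> acc) [1..<n] (P ^^ \<alpha> n)"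

definition poly_op :: "nat \<Rightarrow> ((nat \<Rightarrow> nat) \<Rightarrow> complex) \<Rightarrow> (nat \<Rightarrow> 'a::chilbert \<Rightarrow> 'a) \<Rightarrow> ('a \<Rightarrow> 'a) \<Rightarrow> ('a \<Rightarrow> 'a)" where
  "poly_op n c S P = (\<lambda>x. \<Sum>\<alpha>\<in>{\<alpha>. c \<alpha> \<noteq> 0}. c \<alpha> *\<^sub>C op_monomial n S P \<alpha> x)"

definition commuting_tuple :: "nat \<Rightarrow> (nat \<Rightarrow> 'a::chilbert \<Rightarrow> 'a) \<Rightarrow> ('a \<Rightarrow> 'a) \<Rightarrow> bool" where
  "commuting_tuple n S P \<longleftrightarrow>
     bounded_clinear P \<and> (\<forall>i\<in>{1..n-1}. bounded_clinear (S i)) \<and>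
     (\<forall>i\<in>{1..n-1}. S i \<circ> P = P \<circ> S i) \<and>
     (\<forall>i\<in>{1..n-1}. \<forall>j\<in>{1..n-1}. S i \<circ> S j = S j \<circ> S i)"

definition Gamma_contraction :: "nat \<Rightarrow> (nat \<Rightarrow> 'a::chilbert \<Rightarrow> 'a) \<Rightarrow> ('a \<Rightarrow> 'a) \<Rightarrow> bool" where
  "Gamma_contraction n S P \<longleftrightarrow> commuting_tuple n S P \<and>
     (\<forall>c. is_poly n c \<longrightarrow>
        onorm (poly_op n c S P) \<le> (SUP sp\<in>Gamma n. cmod (poly_eval n c (fst sp) (snd sp))))"

text \<open>An operator in \<open>B(D_P)\<close> is represented by a map on \<open>H\<close> leaving \<open>D_P\<close> invariant
and bounded complex-linear on \<open>D_P\<close>; only its values on \<open>D_P\<close> matter.\<close>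
definition op_on :: "'a::chilbert set \<Rightarrow> ('a \<Rightarrow> 'a) \<Rightarrow> bool" where
  "op_on D F \<longleftrightarrow> (\<forall>x\<in>D. F x \<in> D) \<and>
     (\<forall>x\<in>D. \<forall>y\<in>D. F (x + y) = F x + F y) \<and>
     (\<forall>c. \<forall>x\<in>D. F (c *\<^sub>C x) = c *\<^sub>C F x) \<and>
     (\<exists>K. \<forall>x\<in>D. norm (F x) \<le> K * norm x)"

definition fundamental_tuple ::
  "nat \<Rightarrow> (nat \<Rightarrow> 'a::chilbert \<Rightarrow> 'a) \<Rightarrow> ('a \<Rightarrow> 'a) \<Rightarrow> (nat \<Rightarrow> 'a \<Rightarrow> 'a) \<Rightarrow> bool" where
  "fundamental_tuple n S P F \<longleftrightarrow>
     (\<forall>i\<in>{1..n-1}. op_on (defect_space P) (F i) \<and>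
        (\<forall>x. S i x - adjoint (S (n - i)) (P x) = defect_op P (F i (defect_op P x))))"

definition commute_on :: "'a set \<Rightarrow> ('a \<Rightarrow> 'a) \<Rightarrow> ('a \<Rightarrow> 'a) \<Rightarrow> bool" where
  "commute_on D X Y \<longleftrightarrow> (\<forall>x\<in>D. X (Y x) = Y (X x))"

end

theory Submission
  imports Defs "HOL-Computational_Algebra.Formal_Power_Series"
begin


definition sqc :: "nat \<Rightarrow> real" where
  "sqc k = ((1/2::real) gchoose k) * (-1)^k"

lemma sqc_poch: "sqc k = pochhammer (-1/2) k / fact k"
  unfolding sqc_def gbinomial_pochhammer by (simp add: power_mult_distrib[symmetric])

lemma sqc_0: "sqc 0 = 1" by (simp add: sqc_def)

lemma sqc_nonpos: "k \<ge> 1 \<Longrightarrow> sqc k \<le> 0"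
proof -
  assume "k \<ge> 1" then obtain m where k: "k = Suc m" by (cases k) auto
  have "pochhammer (-1/2::real) (Suc m) = (-1/2) * pochhammer (1/2) m"
    by (simp add: pochhammer_rec)
  moreover have "pochhammer (1/2::real) m \<ge> 0" by (rule pochhammer_nonneg) simp
  ultimately show ?thesis unfolding sqc_poch k
    by (simp add: divide_nonpos_pos mult_nonpos_nonneg)
qed

lemma sqc_psum_nonneg: "(\<Sum>k\<le>N. sqc k) \<ge> 0"
proof -
  have "(\<Sum>k\<le>N. sqc k) = (-1)^N * ((1/2::real) - 1 gchoose N)"
    unfolding sqc_def by (rule gbinomial_sum_lower_neg)
  also have "\<dots> = pochhammer (1/2) N / fact N"
    by (simp add: gbinomial_pochhammer power_mult_distrib[symmetric])
  also have "\<dots> \<ge> 0" by (simp add: pochhammer_nonneg)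
  finally show ?thesis .
qed

lemma sqc_conv: "(\<Sum>j\<le>n. sqc j * sqc (n - j)) = (if n = 0 then 1 else if n = 1 then -1 else 0)"
proof -
  have "(\<Sum>j\<le>n. sqc j * sqc (n - j)) = (\<Sum>j\<in>{0..n}. ((1/2::real) gchoose j) * (1/2 gchoose (n - j))) * (-1)^n"
    unfolding sqc_def sum_distrib_right atMost_atLeast0
    by (rule sum.cong) (auto simp: power_add[symmetric])
  also have "\<dots> = (1 gchoose n) * (-1)^n" by (simp add: gbinomial_Vandermonde)
  also have "\<dots> = (if n = 0 then 1 else if n = 1 then -1 else 0)"
  proof -
    have "(1::real) gchoose n = of_nat (1 choose n)" using binomial_gbinomial[of 1 n, where 'a=real] by simp
    then show ?thesis by (cases n) (auto simp: binomial_eq_0)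
  qed
  finally show ?thesis .
qed

lemma sqc_abs_summable: "summable (\<lambda>k. \<bar>sqc k\<bar>)"
proof (rule summableI_nonneg_bounded[where x=2])
  fix n
  have "(\<Sum>k<n. \<bar>sqc k\<bar>) \<le> (\<Sum>k\<le>n. \<bar>sqc k\<bar>)" by (rule sum_mono2) auto
  also have "(\<Sum>k\<le>n. \<bar>sqc k\<bar>) = 2 * sqc 0 - (\<Sum>k\<le>n. sqc k)"
  proof -
    have "(\<Sum>k\<le>n. \<bar>sqc k\<bar>) = (\<Sum>k\<le>n. (if k = 0 then 2 * sqc 0 else 0) - sqc k)"
      proof (rule sum.cong[OF refl])
        fix k assume "k \<in> {..n}"
        show "\<bar>sqc k\<bar> = (if k = 0 then 2 * sqc 0 else 0) - sqc k"
        proof (cases "k = 0")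
          case False then have "sqc k \<le> 0" by (intro sqc_nonpos) simp
          then show ?thesis using False by simp
        qed (simp add: sqc_0)
      qed
    then show ?thesis by (simp add: sum_subtractf)
  qed
  also have "\<dots> \<le> 2" using sqc_psum_nonneg[of n] by (simp add: sqc_0)
  finally show "(\<Sum>k<n. \<bar>sqc k\<bar>) \<le> 2" .
qed simp


context chilbert begin
end

lemma cinner_add_right: "cinner x (y + z) = cinner x y + cinner x (z::'a::chilbert)"
  by (metis cinner_commute cinner_add_left complex_cnj_add)
lemma cinner_scaleC_right: "cinner x (a *\<^sub>C y) = a * cinner x (y::'a::chilbert)"
  by (metis cinner_commute cinner_scaleC_left complex_cnj_cnj complex_cnj_mult)
lemma cinner_zero_left[simp]: "cinner 0 (y::'a::chilbert) = 0"
  using cinner_add_left[of "0::'a" 0 y] by simp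
lemma cinner_zero_right[simp]: "cinner x (0::'a::chilbert) = 0"
  using cinner_add_right[of x "0::'a" 0] by simp
lemma cinner_minus_left: "cinner (- x) (y::'a::chilbert) = - cinner x y"
  using cinner_add_left[of x "-x" y] by (simp add: add_eq_0_iff)
lemma cinner_minus_right: "cinner x (- y::'a::chilbert) = - cinner x y"
  using cinner_add_right[of x y "-y"] by (simp add: add_eq_0_iff)
lemma cinner_diff_left: "cinner (x - z) (y::'a::chilbert) = cinner x y - cinner z y"
  using cinner_add_left[of x "-z" y] by (simp add: cinner_minus_left)
lemma cinner_diff_right: "cinner x (y - z::'a::chilbert) = cinner x y - cinner x z"
  using cinner_add_right[of x y "-z"] by (simp add: cinner_minus_right)
lemma cinner_sum_right: "cinner x (\<Sum>i\<in>I. f i::'a::chilbert) = (\<Sum>i\<in>I. cinner x (f i))"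
  by (induction I rule: infinite_finite_induct) (auto simp: cinner_add_right)

lemma scaleC_scaleR: "complex_of_real r *\<^sub>C x = r *\<^sub>R (x::'a::chilbert)"
  by (simp add: scaleR_scaleC)
lemma scaleC_zero_left[simp]: "0 *\<^sub>C (x::'a::chilbert) = 0"
  using scaleC_scaleR[of 0 x] by simp
lemma scaleC_zero_right[simp]: "a *\<^sub>C (0::'a::chilbert) = 0"
  using scaleC_add_right[of a "0::'a" 0] by simp
lemma scaleC_minus_right: "a *\<^sub>C (- x::'a::chilbert) = - (a *\<^sub>C x)"
  using scaleC_add_right[of a x "-x"] by (simp add: add_eq_0_iff)
lemma scaleC_diff_right: "a *\<^sub>C (x - y::'a::chilbert) = a *\<^sub>C x - a *\<^sub>C y"
  using scaleC_add_right[of a x "-y"] by (simp add: scaleC_minus_right)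
lemma scaleC_minus_left: "(- a) *\<^sub>C (x::'a::chilbert) = - (a *\<^sub>C x)"
  using scaleC_add_left[of a "-a" x] by (simp add: add_eq_0_iff)

lemma mult_cnj_cmod: "z * cnj z = complex_of_real ((cmod z)\<^sup>2)"
  by (simp add: complex_mult_cnj norm_complex_def)

lemma cinner_self_real: "cinner x (x::'a::chilbert) = complex_of_real ((norm x)\<^sup>2)"
proof -
  have "Im (cinner x x) = 0" using cinner_commute[of x x]
    by (metis cnj.simps(2) equation_minus_iff zero_complex.simps(2) complex_eq_iff neg_equal_zero)
  moreover have "Re (cinner x x) = (norm x)\<^sup>2" using norm_cinner[of x] cinner_nonneg[of x] by simp
  ultimately show ?thesis by (simp add: complex_eq_iff)
qed

lemma cinner_self_eq_0: "cinner x x = 0 \<longleftrightarrow> x = (0::'a::chilbert)"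
  using cinner_zero by auto

lemma norm_scaleC: "norm (a *\<^sub>C (x::'a::chilbert)) = cmod a * norm x"
proof -
  have "(norm (a *\<^sub>C x))\<^sup>2 = (cmod a * norm x)\<^sup>2"
  proof -
    have "complex_of_real ((norm (a *\<^sub>C x))\<^sup>2) = cinner (a *\<^sub>C x) (a *\<^sub>C x)"
      by (simp only: cinner_self_real)
    also have "\<dots> = cnj a * a * cinner x x"
      by (simp add: cinner_scaleC_left cinner_scaleC_right)
    also have "\<dots> = complex_of_real ((cmod a * norm x)\<^sup>2)"
      by (simp add: cinner_self_real power_mult_distrib mult.commute mult_cnj_cmod)
    finally show ?thesis by (simp only: of_real_eq_iff)
  qed
  then show ?thesis by (simp add: power2_eq_iff_nonneg)
qed

lemma cinner_ext_right: "(\<And>y. cinner y x = cinner y x') \<Longrightarrow> x = (x'::'a::chilbert)"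
  using cinner_self_eq_0[of "x - x'"] by (simp add: cinner_diff_right)

lemma norm_sq_add: "(norm (x + y))\<^sup>2 = (norm x)\<^sup>2 + (norm y)\<^sup>2 + 2 * Re (cinner x (y::'a::chilbert))"
proof -
  have "complex_of_real ((norm (x + y))\<^sup>2) = cinner (x + y) (x + y)"
    by (simp only: cinner_self_real)
  also have "\<dots> = cinner x x + cinner y y + (cinner x y + cinner y x)"
    by (simp add: cinner_add_left cinner_add_right algebra_simps)
  also have "cinner x y + cinner y x = of_real (2 * Re (cinner x y))"
    by (subst cinner_commute[of y x]) (simp add: complex_add_cnj)
  finally have "Re (complex_of_real ((norm (x + y))\<^sup>2)) = Re (cinner x x + cinner y y + of_real (2 * Re (cinner x y)))"
    by simp
  then show ?thesis by (simp add: cinner_self_real)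
qed

lemma cauchy_schwarz: "cmod (cinner x y) \<le> norm x * norm (y::'a::chilbert)"
proof (cases "y = 0")
  case False
  define c where "c = cinner y x"
  define N where "N = (norm y)\<^sup>2"
  have N: "N > 0" using False by (simp add: N_def)
  define z where "z = complex_of_real N *\<^sub>C x - c *\<^sub>C y"
  have cxy: "cinner x y = cnj c" by (simp add: c_def flip: cinner_commute)
  have "cinner z z = of_real N * of_real N * cinner x x - of_real N * c * cinner x y
       - of_real N * cnj c * cinner y x + cnj c * c * cinner y y"
    unfolding z_def by (simp add: cinner_diff_left cinner_diff_right cinner_scaleC_left cinner_scaleC_right algebra_simps)
  also have "\<dots> = of_real N * (of_real N * of_real ((norm x)\<^sup>2) - c * cnj c)"
    by (simp add: cxy c_def[symmetric] cinner_self_real N_def[symmetric] algebra_simps)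
  also have "c * cnj c = of_real ((cmod c)\<^sup>2)" by (simp add: mult_cnj_cmod)
  finally have "cinner z z = of_real (N * (N * (norm x)\<^sup>2 - (cmod c)\<^sup>2))" by simp
  then have "0 \<le> N * (N * (norm x)\<^sup>2 - (cmod c)\<^sup>2)"
    by (metis cinner_self_real of_real_eq_iff zero_le_power2)
  then have "(cmod c)\<^sup>2 \<le> (norm y * norm x)\<^sup>2" using N
    by (simp add: N_def power_mult_distrib zero_le_mult_iff)
  then have "cmod c \<le> norm y * norm x"
    by (rule power2_le_imp_le) simp
  then show ?thesis by (simp add: c_def cinner_commute[of x y] mult.commute)
qed simp


lemma parallelogram: "(norm (u + v))\<^sup>2 + (norm (u - v))\<^sup>2 = 2 * (norm u)\<^sup>2 + 2 * (norm (v::'a::chilbert))\<^sup>2"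
  using norm_sq_add[of u v] norm_sq_add[of u "-v"] by (simp add: cinner_minus_right)

lemma riesz:
  fixes f :: "'a::chilbert \<Rightarrow> complex"
  assumes bl: "bounded_linear f" and hom: "\<And>c x. f (c *\<^sub>C x) = c * f x"
  shows "\<exists>z. \<forall>x. f x = cinner z x"
proof (cases "\<forall>x. f x = 0")
  case True then show ?thesis by (intro exI[of _ 0]) simp
next
  case False
  then obtain y where fy: "f y \<noteq> 0" by blast
  interpret f: bounded_linear f by (rule bl)
  define K where "K = {x. f x = 0}"
  have K0: "0 \<in> K" by (simp add: K_def)
  have Kadd: "a + b \<in> K" if "a \<in> K" "b \<in> K" for a b using that by (simp add: K_def f.add)
  have KscaleC: "c *\<^sub>C a \<in> K" if "a \<in> K" for a c using that by (simp add: K_def hom)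
  have KscaleR: "c *\<^sub>R a \<in> K" if "a \<in> K" for a c using that by (simp add: K_def f.scaleR)
  have Kclosed: "closed K"
  proof -
    have "continuous_on UNIV f" by (rule linear_continuous_on[OF bl])
    then show ?thesis unfolding K_def using closed_Collect_eq[of f "\<lambda>_. 0"]
      by (simp add: continuous_on_const)
  qed
  define S where "S = (\<lambda>k. (norm (y - k))\<^sup>2) ` K"
  define d2 where "d2 = Inf S"
  have Sne: "S \<noteq> {}" using K0 by (auto simp: S_def)
  have Sbdd: "bdd_below S" unfolding S_def by (rule bdd_belowI[of _ 0]) auto
  have d2le: "d2 \<le> (norm (y - k))\<^sup>2" if "k \<in> K" for k
    unfolding d2_def S_def using Sbdd that by (intro cINF_lower) (auto simp: S_def)
  have "\<exists>k\<in>K. (norm (y - k))\<^sup>2 < d2 + inverse (real (Suc m))" for m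
  proof -
    have "Inf S < d2 + inverse (real (Suc m))" by (simp add: d2_def)
    from cInf_lessD[OF Sne this] show ?thesis by (auto simp: S_def)
  qed
  then obtain ks where ksK: "\<And>m. ks m \<in> K"
    and ksd: "\<And>m. (norm (y - ks m))\<^sup>2 < d2 + inverse (real (Suc m))" by metis
  have pair: "(norm (ks m - ks l))\<^sup>2 \<le> 2 * inverse (real (Suc m)) + 2 * inverse (real (Suc l))" for m l
  proof -
    define mid where "mid = (1/2) *\<^sub>R (ks m + ks l)"
    have midK: "mid \<in> K" unfolding mid_def by (intro KscaleR Kadd ksK)
    have "(y - ks m) + (y - ks l) = 2 *\<^sub>R (y - mid)" by (simp add: mid_def algebra_simps scaleR_2)
    then have "(norm ((y - ks m) + (y - ks l)))\<^sup>2 = 4 * (norm (y - mid))\<^sup>2"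
      by (simp add: power_mult_distrib)
    moreover have "(y - ks m) - (y - ks l) = - (ks m - ks l)" by simp
    ultimately have "4 * (norm (y - mid))\<^sup>2 + (norm (ks m - ks l))\<^sup>2 =
        2 * (norm (y - ks m))\<^sup>2 + 2 * (norm (y - ks l))\<^sup>2"
      using parallelogram[of "y - ks m" "y - ks l"] by (metis norm_minus_cancel)
    then show ?thesis using d2le[OF midK] ksd[of m] ksd[of l] by linarith
  qed
  have "Cauchy ks"
  proof (rule CauchyI)
    fix e :: real assume e: "e > 0"
    obtain M where M: "inverse (real (Suc M)) < e\<^sup>2 / 4"
      using reals_Archimedean[of "e\<^sup>2/4"] e by auto
    have "norm (ks m - ks l) < e" if "m \<ge> M" "l \<ge> M" for m l
    proof -
      have "inverse (real (Suc m)) \<le> inverse (real (Suc M))"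
        "inverse (real (Suc l)) \<le> inverse (real (Suc M))" using that by (auto simp: field_simps)
      then have "(norm (ks m - ks l))\<^sup>2 < e\<^sup>2" using pair[of m l] M by linarith
      then show ?thesis using e by (simp add: power_less_imp_less_base)
    qed
    then show "\<exists>M. \<forall>m\<ge>M. \<forall>n\<ge>M. norm (ks m - ks n) < e" by blast
  qed
  then obtain k0 where k0: "ks \<longlonglongrightarrow> k0" by (auto simp: Cauchy_convergent_iff convergent_def)
  have k0K: "k0 \<in> K" by (rule closed_sequentially[OF Kclosed ksK k0])
  have "(norm (y - k0))\<^sup>2 \<le> d2"
  proof (rule LIMSEQ_le)
    show "(\<lambda>m. (norm (y - ks m))\<^sup>2) \<longlonglongrightarrow> (norm (y - k0))\<^sup>2"
      by (intro tendsto_intros k0)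
    show "(\<lambda>m. d2 + inverse (real (Suc m))) \<longlonglongrightarrow> d2" by (rule LIMSEQ_inverse_real_of_nat_add)
    show "\<exists>N. \<forall>n\<ge>N. (norm (y - ks n))\<^sup>2 \<le> d2 + inverse (real (Suc n))"
      using ksd less_imp_le by blast
  qed
  define w where "w = y - k0"
  have wmin: "(norm w)\<^sup>2 \<le> (norm (w - k))\<^sup>2" if "k \<in> K" for k
  proof -
    have "d2 \<le> (norm (y - (k0 + k)))\<^sup>2" by (rule d2le) (intro Kadd k0K that)
    moreover have e: "w - k = y - (k0 + k)" by (simp add: w_def)
    ultimately show ?thesis using \<open>(norm (y - k0))\<^sup>2 \<le> d2\<close> unfolding e by (simp only: w_def)
  qed
  have w0: "w \<noteq> 0" using k0K fy by (auto simp: w_def K_def)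
  have orth: "cinner w k = 0" if "k \<in> K" for k
  proof (rule ccontr)
    assume c0: "cinner w k \<noteq> 0"
    then have k0': "k \<noteq> 0" by auto
    define c where "c = cinner k w"
    define N where "N = (norm k)\<^sup>2"
    have N: "N > 0" using k0' by (simp add: N_def)
    define t where "t = c / complex_of_real N"
    have "t *\<^sub>C k \<in> K" by (rule KscaleC[OF that])
    from wmin[OF this] have le: "(norm w)\<^sup>2 \<le> (norm (w - t *\<^sub>C k))\<^sup>2" .
    have "(norm (w - t *\<^sub>C k))\<^sup>2 = (norm w)\<^sup>2 + (norm (t *\<^sub>C k))\<^sup>2 + 2 * Re (cinner w (- (t *\<^sub>C k)))"
      using norm_sq_add[of w "- (t *\<^sub>C k)"] by simp
    also have "(norm (t *\<^sub>C k))\<^sup>2 = (cmod c)\<^sup>2 / N"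
    proof -
      have ct: "cmod t = cmod c / N" using N by (simp add: t_def norm_divide)
      have "(norm (t *\<^sub>C k))\<^sup>2 = (cmod c / N)\<^sup>2 * N" by (simp add: norm_scaleC ct power_mult_distrib N_def power_divide)
      also have "\<dots> = (cmod c)\<^sup>2 / N" using N by (simp add: power2_eq_square field_simps)
      finally show ?thesis .
    qed
    also have "cinner w (- (t *\<^sub>C k)) = - (t * cnj c)"
      by (simp add: cinner_minus_right cinner_scaleC_right c_def flip: cinner_commute)
    also have "t * cnj c = complex_of_real ((cmod c)\<^sup>2 / N)"
      by (simp add: t_def mult_cnj_cmod)
    finally have "(norm (w - t *\<^sub>C k))\<^sup>2 = (norm w)\<^sup>2 - (cmod c)\<^sup>2 / N" by simp
    with le have "(cmod c)\<^sup>2 / N \<le> 0" by simp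
    then have "c = 0" using N by (simp add: divide_le_0_iff)
    then show False using c0 by (simp add: c_def cinner_commute[of w k])
  qed
  define z where "z = (cnj (f w) / complex_of_real ((norm w)\<^sup>2)) *\<^sub>C w"
  have "f x = cinner z x" for x
  proof -
    have "f x *\<^sub>C w - f w *\<^sub>C x \<in> K" by (simp add: K_def f.diff hom)
    from orth[OF this] have "f x * cinner w w - f w * cinner w x = 0"
      by (simp add: cinner_diff_right cinner_scaleC_right)
    then have "f x = f w * cinner w x / complex_of_real ((norm w)\<^sup>2)"
      using w0 by (simp add: cinner_self_real field_simps)
    then show ?thesis by (simp add: z_def cinner_scaleC_left)
  qed
  then show ?thesis by blast
qed


lemma bclin_bl: "bounded_clinear T \<Longrightarrow> bounded_linear T"
  by (simp add: bounded_clinear_def)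
lemma bclin_scaleC: "bounded_clinear T \<Longrightarrow> T (c *\<^sub>C x) = c *\<^sub>C T x"
  by (simp add: bounded_clinear_def)
lemma bclin_add: "bounded_clinear T \<Longrightarrow> T (x + y) = T x + T y"
  by (simp add: bounded_clinear_def linear_add bounded_linear.linear)
lemma bclin_diff: "bounded_clinear T \<Longrightarrow> T (x - y) = T x - T y"
  by (simp add: bounded_clinear_def linear_diff bounded_linear.linear)
lemma bclin_minus: "bounded_clinear T \<Longrightarrow> T (- x) = - T x"
  by (simp add: bounded_clinear_def linear_neg bounded_linear.linear)
lemma bclin_zero: "bounded_clinear T \<Longrightarrow> T 0 = 0"
  by (simp add: bounded_clinear_def linear_0 bounded_linear.linear)
lemma bclin_sum: "bounded_clinear T \<Longrightarrow> T (\<Sum>i\<in>I. f i) = (\<Sum>i\<in>I. T (f i))"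
  by (simp add: bounded_clinear_def linear_sum bounded_linear.linear)
lemma bclin_scaleR: "bounded_clinear T \<Longrightarrow> T (r *\<^sub>R x) = r *\<^sub>R T x"
  by (simp add: bclin_scaleC scaleR_scaleC)
lemma bclin_bound: "bounded_clinear T \<Longrightarrow> \<exists>K>0. \<forall>x. norm (T x) \<le> norm x * K"
  by (simp add: bounded_clinear_def bounded_linear.pos_bounded)

lemma bclinI:
  assumes "\<And>x y. T (x + y) = T x + T y" "\<And>c x. T (c *\<^sub>C x) = c *\<^sub>C T x"
    "\<And>x. norm (T x) \<le> norm x * K"
  shows "bounded_clinear T"
  unfolding bounded_clinear_def
  using assms by (auto intro!: bounded_linear_intro[where K=K] simp: scaleR_scaleC)

lemma bclin_comp: "bounded_clinear S \<Longrightarrow> bounded_clinear T \<Longrightarrow> bounded_clinear (S \<circ> T)"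
  unfolding bounded_clinear_def using bounded_linear_compose[of S T] by (auto simp: comp_def)
lemma bclin_comp': "bounded_clinear S \<Longrightarrow> bounded_clinear T \<Longrightarrow> bounded_clinear (\<lambda>x. S (T x))"
  using bclin_comp[of S T] by (simp add: comp_def)
lemma bclin_id: "bounded_clinear (\<lambda>x::'a::chilbert. x)"
  unfolding bounded_clinear_def by (auto intro: bounded_linear_ident)
lemma bclin_diff_op: "bounded_clinear S \<Longrightarrow> bounded_clinear T \<Longrightarrow> bounded_clinear (\<lambda>x. S x - T x)"
  unfolding bounded_clinear_def by (auto intro: bounded_linear_sub simp: scaleC_diff_right)
lemma bclin_add_op: "bounded_clinear S \<Longrightarrow> bounded_clinear T \<Longrightarrow> bounded_clinear (\<lambda>x. S x + T x)"
  unfolding bounded_clinear_def by (auto intro: bounded_linear_add simp: scaleC_add_right)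
lemma bclin_pow: "bounded_clinear T \<Longrightarrow> bounded_clinear (T ^^ k)"
proof (induction k)
  case 0 then show ?case using bclin_id by (simp add: id_def)
qed (auto simp: bclin_comp)

lemma bclin_continuous: "bounded_clinear T \<Longrightarrow> f \<longlonglongrightarrow> l \<Longrightarrow> (\<lambda>n. T (f n)) \<longlonglongrightarrow> T l"
  using bounded_linear.tendsto bclin_bl by blast

lemma adjoint_exists:
  assumes T: "bounded_clinear (T::'a::chilbert \<Rightarrow> 'a)"
  shows "\<exists>G. \<forall>x y. cinner (T x) y = cinner x (G y)"
proof -
  obtain K where K: "\<forall>x. norm (T x) \<le> norm x * K" using bclin_bound[OF T] by blast
  have "\<exists>z. \<forall>x. cinner y (T x) = cinner z x" for y
  proof (rule riesz)
    show "bounded_linear (\<lambda>x. cinner y (T x))"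
    proof (rule bounded_linear_intro[where K="norm y * K"])
      show "cinner y (T (a + b)) = cinner y (T a) + cinner y (T b)" for a b
        by (simp add: bclin_add[OF T] cinner_add_right)
      show "cinner y (T (r *\<^sub>R a)) = r *\<^sub>R cinner y (T a)" for r a
        by (simp add: bclin_scaleC[OF T] scaleR_scaleC cinner_scaleC_right scaleR_conv_of_real)
      show "norm (cinner y (T a)) \<le> norm a * (norm y * K)" for a
      proof -
        have "norm (cinner y (T a)) \<le> norm y * norm (T a)" by (rule cauchy_schwarz)
        also have "\<dots> \<le> norm y * (norm a * K)" using K by (simp add: mult_left_mono)
        finally show ?thesis by (simp add: algebra_simps)
      qed
    qed
    show "cinner y (T (c *\<^sub>C x)) = c * cinner y (T x)" for c x
      by (simp add: bclin_scaleC[OF T] cinner_scaleC_right)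
  qed
  then obtain G where G: "\<And>y x. cinner y (T x) = cinner (G y) x" by metis
  have "cinner (T x) y = cinner x (G y)" for x y
    by (metis G cinner_commute)
  then show ?thesis by blast
qed

lemma adjoint_unique:
  assumes "\<And>x y. cinner (T x) y = cinner x (G y)"
  shows "adjoint T = (G::'a::chilbert \<Rightarrow> 'a)"
  unfolding adjoint_def
proof (rule the_equality)
  show "\<forall>x y. cinner (T x) y = cinner x (G y)" using assms by blast
  fix G' assume "\<forall>x y. cinner (T x) y = cinner x (G' y)"
  then have "cinner x (G' y) = cinner x (G y)" for x y using assms by metis
  then show "G' = G" by (intro ext cinner_ext_right) blast
qed

lemma adjoint_prop:
  assumes "bounded_clinear (T::'a::chilbert \<Rightarrow> 'a)"
  shows "cinner (T x) y = cinner x (adjoint T y)"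
proof -
  obtain G where G: "\<And>x y. cinner (T x) y = cinner x (G y)" using adjoint_exists[OF assms] by blast
  then show ?thesis using adjoint_unique[of T G] by simp
qed

lemma adjoint_prop2:
  assumes "bounded_clinear (T::'a::chilbert \<Rightarrow> 'a)"
  shows "cinner (adjoint T x) y = cinner x (T y)"
  by (metis adjoint_prop[OF assms] cinner_commute)

lemma adjoint_adjoint:
  assumes "bounded_clinear (T::'a::chilbert \<Rightarrow> 'a)"
  shows "adjoint (adjoint T) = T"
  by (rule adjoint_unique) (rule adjoint_prop2[OF assms])

lemma adjoint_bclin:
  assumes T: "bounded_clinear (T::'a::chilbert \<Rightarrow> 'a)"
  shows "bounded_clinear (adjoint T)"
proof -
  obtain K where K: "K > 0" "\<forall>x. norm (T x) \<le> norm x * K" using bclin_bound[OF T] by blast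
  let ?G = "adjoint T"
  have add: "?G (x + y) = ?G x + ?G y" for x y
    by (rule cinner_ext_right) (simp add: adjoint_prop[OF T, symmetric] cinner_add_right)
  have sc: "?G (c *\<^sub>C x) = c *\<^sub>C ?G x" for c x
    by (rule cinner_ext_right) (simp add: adjoint_prop[OF T, symmetric] cinner_scaleC_right)
  have bd: "norm (?G y) \<le> norm y * K" for y
  proof -
    have "(norm (?G y))\<^sup>2 = Re (cinner (?G y) (?G y))" by (simp add: cinner_self_real)
    also have "\<dots> = Re (cinner (T (?G y)) y)" by (simp add: adjoint_prop[OF T])
    also have "\<dots> \<le> cmod (cinner (T (?G y)) y)" by (rule complex_Re_le_cmod)
    also have "\<dots> \<le> norm (T (?G y)) * norm y" by (rule cauchy_schwarz)
    also have "\<dots> \<le> norm (?G y) * K * norm y" using K by (simp add: mult_right_mono)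
    finally have "norm (?G y) * norm (?G y) \<le> norm (?G y) * (norm y * K)"
      by (simp add: power2_eq_square algebra_simps)
    then show ?thesis
      using K by (cases "?G y = 0") (auto simp: mult_le_cancel_left)
  qed
  show ?thesis by (rule bclinI[OF add sc bd])
qed


definition contr :: "('a::chilbert \<Rightarrow> 'a) \<Rightarrow> bool" where
  "contr X \<longleftrightarrow> bounded_clinear X \<and> (\<forall>x. norm (X x) \<le> norm x)"

definition sqrt_ser :: "('a::chilbert \<Rightarrow> 'a) \<Rightarrow> 'a \<Rightarrow> 'a" where
  "sqrt_ser X x = (\<Sum>k. sqc k *\<^sub>R (X ^^ k) x)"

definition psum :: "('a::chilbert \<Rightarrow> 'a) \<Rightarrow> nat \<Rightarrow> 'a \<Rightarrow> 'a" where
  "psum X n x = (\<Sum>k<n. sqc k *\<^sub>R (X ^^ k) x)"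

definition sqA :: real where "sqA = (\<Sum>k. \<bar>sqc k\<bar>)"

lemma sqA_nonneg: "sqA \<ge> 0"
  unfolding sqA_def by (rule suminf_nonneg[OF sqc_abs_summable]) simp

lemma psum_abs_le: "(\<Sum>k<n. \<bar>sqc k\<bar>) \<le> sqA"
  unfolding sqA_def by (rule sum_le_suminf[OF sqc_abs_summable]) auto

lemma funpow_contr: "contr X \<Longrightarrow> norm ((X ^^ k) x) \<le> norm x"
proof (induction k)
  case (Suc k)
  then have "norm (X ((X ^^ k) x)) \<le> norm ((X ^^ k) x)" by (simp add: contr_def)
  then show ?case using Suc by simp
qed simp

lemma funpow_bclin: "contr X \<Longrightarrow> bounded_clinear (X ^^ k)"
  by (simp add: contr_def bclin_pow)

lemma ser_norm_summable: "contr X \<Longrightarrow> summable (\<lambda>k. norm (sqc k *\<^sub>R (X ^^ k) x))"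
proof -
  assume c: "contr X"
  have "summable (\<lambda>k. \<bar>sqc k\<bar> * norm x)" by (rule summable_mult2[OF sqc_abs_summable])
  then show ?thesis
    by (rule summable_comparison_test'[where N=0]) (simp add: funpow_contr[OF c] mult_left_mono)
qed

lemma ser_summable: "contr X \<Longrightarrow> summable (\<lambda>k. sqc k *\<^sub>R (X ^^ k) x)"
  by (rule summable_norm_cancel[OF ser_norm_summable])

lemma psum_tendsto: "contr X \<Longrightarrow> (\<lambda>n. psum X n x) \<longlonglongrightarrow> sqrt_ser X x"
  unfolding psum_def sqrt_ser_def by (rule summable_LIMSEQ[OF ser_summable])

lemma psum_bound: "contr X \<Longrightarrow> norm (psum X n x) \<le> sqA * norm x"
proof -
  assume c: "contr X"
  have "norm (psum X n x) \<le> (\<Sum>k<n. norm (sqc k *\<^sub>R (X ^^ k) x))"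
    unfolding psum_def by (rule norm_sum)
  also have "\<dots> \<le> (\<Sum>k<n. \<bar>sqc k\<bar> * norm x)"
    by (intro sum_mono) (simp add: funpow_contr[OF c] mult_left_mono)
  also have "\<dots> = (\<Sum>k<n. \<bar>sqc k\<bar>) * norm x" by (simp add: sum_distrib_right)
  also have "\<dots> \<le> sqA * norm x" by (intro mult_right_mono psum_abs_le) simp
  finally show ?thesis .
qed

lemma psum_diff: "contr X \<Longrightarrow> psum X n (x - y) = psum X n x - psum X n y"
  unfolding psum_def by (simp add: bclin_diff[OF funpow_bclin] scaleR_diff_right sum_subtractf)

lemma psum_zero: "psum X 0 x = 0" by (simp add: psum_def)

lemma psum_psum_split:
  assumes c: "contr X" and n: "n \<ge> 2"
  shows "norm (psum X n (psum X n x) - (x - X x))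
     \<le> norm x * ((\<Sum>k<n. \<bar>sqc k\<bar>)\<^sup>2 - (\<Sum>m<n. \<Sum>i\<le>m. \<bar>sqc i\<bar> * \<bar>sqc (m - i)\<bar>))"
proof -
  define g where "g = (\<lambda>(j, k). (sqc j * sqc k) *\<^sub>R (X ^^ (j + k)) x)"
  define Q where "Q = {..<n} \<times> {..<n}"
  define T where "T = {(i, j). i + j < n}"
  have TQ: "T \<subseteq> Q" by (auto simp: T_def Q_def)
  have fQ: "finite Q" by (simp add: Q_def)
  have "psum X n (psum X n x) = (\<Sum>j<n. \<Sum>k<n. g (j, k))"
    unfolding psum_def g_def
    by (simp add: bclin_sum[OF funpow_bclin[OF c]] bclin_scaleR[OF funpow_bclin[OF c]]
        scaleR_sum_right funpow_add)
  also have "\<dots> = sum g Q" unfolding Q_def by (simp add: sum.cartesian_product)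
  also have "\<dots> = sum g (Q - T) + sum g T" by (rule sum.subset_diff[OF TQ fQ])
  finally have eq1: "psum X n (psum X n x) = sum g (Q - T) + sum g T" .
  have "sum g T = (\<Sum>m<n. \<Sum>i\<le>m. g (i, m - i))"
    unfolding T_def using sum.triangle_reindex[of "\<lambda>i j. g (i, j)" n] by simp
  also have "\<dots> = (\<Sum>m<n. (\<Sum>i\<le>m. sqc i * sqc (m - i)) *\<^sub>R (X ^^ m) x)"
    by (intro sum.cong refl) (auto simp: g_def scaleR_sum_left intro!: sum.cong)
  also have "\<dots> = (\<Sum>m<n. (if m = 0 then 1 else if m = 1 then -1 else 0) *\<^sub>R (X ^^ m) x)"
    by (simp add: sqc_conv)
  also have "\<dots> = x - X x"
  proof -
    have "{..<n} = {0..<n}" by auto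
    then have "(\<Sum>m<n. (if m = 0 then 1 else if m = 1 then -1 else 0) *\<^sub>R (X ^^ m) x)
       = (\<Sum>m\<in>{0..<n}. (if m = 0 then 1 else if m = 1 then -1 else 0) *\<^sub>R (X ^^ m) x)" by simp
    also have "\<dots> = x + (- X x + (\<Sum>m\<in>{2..<n}. (if m = 0 then 1 else if m = 1 then -1 else 0) *\<^sub>R (X ^^ m) x))"
      using n by (simp add: sum.atLeast_Suc_lessThan numeral_2_eq_2)
    also have "(\<Sum>m\<in>{2..<n}. (if m = 0 then 1 else if m = 1 then -1 else 0) *\<^sub>R (X ^^ m) x) = 0"
      by (intro sum.neutral) auto
    finally show ?thesis by simp
  qed
  finally have eq2: "sum g T = x - X x" .
  have "norm (sum g (Q - T)) \<le> (\<Sum>p\<in>Q - T. norm (g p))" by (rule norm_sum)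
  also have "\<dots> \<le> (\<Sum>p\<in>Q - T. norm x * (\<lambda>(j,k). \<bar>sqc j\<bar> * \<bar>sqc k\<bar>) p)"
  proof (intro sum_mono)
    fix p assume "p \<in> Q - T"
    obtain j k where p: "p = (j, k)" by fastforce
    have "norm (g p) = \<bar>sqc j * sqc k\<bar> * norm ((X ^^ (j + k)) x)" by (simp add: g_def p)
    also have "\<dots> \<le> \<bar>sqc j * sqc k\<bar> * norm x" by (intro mult_left_mono funpow_contr[OF c]) simp
    finally show "norm (g p) \<le> norm x * (\<lambda>(j,k). \<bar>sqc j\<bar> * \<bar>sqc k\<bar>) p" by (simp add: p abs_mult mult.commute)
  qed
  also have "\<dots> = norm x * (\<Sum>p\<in>Q - T. (\<lambda>(j,k). \<bar>sqc j\<bar> * \<bar>sqc k\<bar>) p)"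
    by (rule sum_distrib_left[symmetric])
  also have "(\<Sum>p\<in>Q - T. (\<lambda>(j,k). \<bar>sqc j\<bar> * \<bar>sqc k\<bar>) p)
      = (\<Sum>p\<in>Q. (\<lambda>(j,k). \<bar>sqc j\<bar> * \<bar>sqc k\<bar>) p) - (\<Sum>p\<in>T. (\<lambda>(j,k). \<bar>sqc j\<bar> * \<bar>sqc k\<bar>) p)"
    using sum.subset_diff[OF TQ fQ, of "\<lambda>(j,k). \<bar>sqc j\<bar> * \<bar>sqc k\<bar>"] by simp
  also have "(\<Sum>p\<in>Q. (\<lambda>(j,k). \<bar>sqc j\<bar> * \<bar>sqc k\<bar>) p) = (\<Sum>k<n. \<bar>sqc k\<bar>)\<^sup>2"
    unfolding Q_def power2_eq_square sum_product by (simp add: sum.cartesian_product)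
  also have "(\<Sum>p\<in>T. (\<lambda>(j,k). \<bar>sqc j\<bar> * \<bar>sqc k\<bar>) p) = (\<Sum>m<n. \<Sum>i\<le>m. \<bar>sqc i\<bar> * \<bar>sqc (m - i)\<bar>)"
    unfolding T_def by (rule sum.triangle_reindex)
  finally have "norm (sum g (Q - T)) \<le> norm x * ((\<Sum>k<n. \<bar>sqc k\<bar>)\<^sup>2 - (\<Sum>m<n. \<Sum>i\<le>m. \<bar>sqc i\<bar> * \<bar>sqc (m - i)\<bar>))" .
  then show ?thesis using eq1 eq2 by simp
qed

lemma coeff_err_tendsto:
  "(\<lambda>n. (\<Sum>k<n. \<bar>sqc k\<bar>)\<^sup>2 - (\<Sum>m<n. \<Sum>i\<le>m. \<bar>sqc i\<bar> * \<bar>sqc (m - i)\<bar>)) \<longlonglongrightarrow> 0"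
proof -
  have s: "summable (\<lambda>k. norm \<bar>sqc k\<bar>)" using sqc_abs_summable by simp
  have "(\<lambda>m. \<Sum>i\<le>m. \<bar>sqc i\<bar> * \<bar>sqc (m - i)\<bar>) sums (sqA * sqA)"
    unfolding sqA_def by (rule Cauchy_product_sums[OF s s])
  then have c: "(\<lambda>n. \<Sum>m<n. \<Sum>i\<le>m. \<bar>sqc i\<bar> * \<bar>sqc (m - i)\<bar>) \<longlonglongrightarrow> sqA * sqA" by (simp add: sums_def)
  have a: "(\<lambda>n. \<Sum>k<n. \<bar>sqc k\<bar>) \<longlonglongrightarrow> sqA" unfolding sqA_def by (rule summable_LIMSEQ[OF sqc_abs_summable])
  have "(\<lambda>n. (\<Sum>k<n. \<bar>sqc k\<bar>)\<^sup>2 - (\<Sum>m<n. \<Sum>i\<le>m. \<bar>sqc i\<bar> * \<bar>sqc (m - i)\<bar>)) \<longlonglongrightarrow> sqA\<^sup>2 - sqA * sqA"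
    by (intro tendsto_intros a c)
  then show ?thesis by (simp add: power2_eq_square)
qed

lemma sqrt_sq:
  assumes c: "contr X"
  shows "sqrt_ser X (sqrt_ser X x) = x - X x"
proof -
  define v where "v = sqrt_ser X x"
  have t1: "(\<lambda>n. psum X n v) \<longlonglongrightarrow> sqrt_ser X v" by (rule psum_tendsto[OF c])
  have t2: "(\<lambda>n. psum X n (psum X n x)) \<longlonglongrightarrow> x - X x"
  proof -
    have "((\<lambda>n. psum X n (psum X n x) - (x - X x)) \<longlongrightarrow> 0) sequentially"
    proof (rule Lim_null_comparison)
      show "\<forall>\<^sub>F n in sequentially. norm (psum X n (psum X n x) - (x - X x))
         \<le> norm x * ((\<Sum>k<n. \<bar>sqc k\<bar>)\<^sup>2 - (\<Sum>m<n. \<Sum>i\<le>m. \<bar>sqc i\<bar> * \<bar>sqc (m - i)\<bar>))"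
        by (rule eventually_mono[OF eventually_ge_at_top[of 2]]) (rule psum_psum_split[OF c])
      show "(\<lambda>n. norm x * ((\<Sum>k<n. \<bar>sqc k\<bar>)\<^sup>2 - (\<Sum>m<n. \<Sum>i\<le>m. \<bar>sqc i\<bar> * \<bar>sqc (m - i)\<bar>))) \<longlonglongrightarrow> 0"
        using tendsto_mult[OF tendsto_const coeff_err_tendsto, of "norm x"] by simp
    qed
    then show ?thesis by (simp add: LIM_zero_iff)
  qed
  have t3: "(\<lambda>n. psum X n v - psum X n (psum X n x)) \<longlonglongrightarrow> 0"
  proof (rule Lim_null_comparison)
    show "\<forall>\<^sub>F n in sequentially. norm (psum X n v - psum X n (psum X n x)) \<le> sqA * norm (v - psum X n x)"
      using psum_bound[OF c] by (simp add: psum_diff[OF c, symmetric])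
    have "(\<lambda>n. psum X n x - v) \<longlonglongrightarrow> 0" using psum_tendsto[OF c, of x] by (simp add: v_def LIM_zero_iff)
    then have "(\<lambda>n. norm (v - psum X n x)) \<longlonglongrightarrow> 0"
      using tendsto_norm_zero[of "\<lambda>n. psum X n x - v"] by (simp add: norm_minus_commute)
    then show "(\<lambda>n. sqA * norm (v - psum X n x)) \<longlonglongrightarrow> 0"
      using tendsto_mult[OF tendsto_const, of _ 0 _ sqA] by simp
  qed
  have "(\<lambda>n. psum X n v) \<longlonglongrightarrow> x - X x"
    using tendsto_add[OF t3 t2] by simp
  with t1 show ?thesis unfolding v_def[symmetric] by (rule LIMSEQ_unique)
qed

lemma funpow_intertwine:
  assumes "\<And>y. T (X1 y) = X2 (T y)"
  shows "T ((X1 ^^ k) y) = (X2 ^^ k) (T y)"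
  using assms by (induction k arbitrary: y) auto

lemma sqrt_intertwine:
  assumes T: "bounded_clinear T" and c1: "contr X1" and c2: "contr X2"
    and i: "\<And>y. T (X1 y) = X2 (T y)"
  shows "T (sqrt_ser X1 x) = sqrt_ser X2 (T x)"
proof -
  have "T (sqrt_ser X1 x) = (\<Sum>k. T (sqc k *\<^sub>R (X1 ^^ k) x))"
    unfolding sqrt_ser_def by (rule bounded_linear.suminf[OF bclin_bl[OF T] ser_summable[OF c1]])
  also have "\<dots> = sqrt_ser X2 (T x)"
    unfolding sqrt_ser_def by (simp add: bclin_scaleR[OF T] funpow_intertwine[of T X1 X2, OF i])
  finally show ?thesis .
qed

lemma bl_scaleC: "bounded_linear (\<lambda>v::'a::chilbert. c *\<^sub>C v)"
proof (rule bounded_linear_intro[where K="cmod c"])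
  show "c *\<^sub>C (x + y) = c *\<^sub>C x + c *\<^sub>C y" for x y :: 'a by (rule scaleC_add_right)
  show "c *\<^sub>C (r *\<^sub>R x) = r *\<^sub>R (c *\<^sub>C x)" for r and x :: 'a
    by (simp add: scaleR_scaleC scaleC_scaleC mult.commute)
  show "norm (c *\<^sub>C x) \<le> norm x * cmod c" for x :: 'a by (simp add: norm_scaleC mult.commute)
qed

lemma sqrt_bclin:
  assumes c: "contr X"
  shows "bounded_clinear (sqrt_ser X)"
proof (rule bclinI[where K=sqA])
  show "sqrt_ser X (x + y) = sqrt_ser X x + sqrt_ser X y" for x y
    unfolding sqrt_ser_def
    by (simp add: suminf_add[OF ser_summable[OF c] ser_summable[OF c]] bclin_add[OF funpow_bclin[OF c]]
        scaleR_add_right)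
  show "sqrt_ser X (a *\<^sub>C x) = a *\<^sub>C sqrt_ser X x" for a x
  proof -
    have "a *\<^sub>C sqrt_ser X x = (\<Sum>k. a *\<^sub>C (sqc k *\<^sub>R (X ^^ k) x))"
      unfolding sqrt_ser_def by (rule bounded_linear.suminf[OF bl_scaleC ser_summable[OF c]])
    also have "\<dots> = sqrt_ser X (a *\<^sub>C x)"
      unfolding sqrt_ser_def
      by (simp add: bclin_scaleC[OF funpow_bclin[OF c]] scaleR_scaleC scaleC_scaleC mult.commute)
    finally show ?thesis by simp
  qed
  show "norm (sqrt_ser X x) \<le> norm x * sqA" for x
  proof (rule LIMSEQ_le_const2)
    show "(\<lambda>n. norm (psum X n x)) \<longlonglongrightarrow> norm (sqrt_ser X x)" by (intro tendsto_intros psum_tendsto[OF c])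
    show "\<exists>N. \<forall>n\<ge>N. norm (psum X n x) \<le> norm x * sqA" using psum_bound[OF c] by (auto simp: mult.commute)
  qed
qed

definition selfadj :: "('a::chilbert \<Rightarrow> 'a) \<Rightarrow> bool" where
  "selfadj X \<longleftrightarrow> (\<forall>x y. cinner (X x) y = cinner x (X y))"

lemma funpow_selfadj: "selfadj X \<Longrightarrow> cinner ((X ^^ k) x) y = cinner x ((X ^^ k) y)"
  by (induction k arbitrary: x y) (auto simp: selfadj_def funpow_swap1)

lemma bl_cinner_right: "bounded_linear (\<lambda>v. cinner (x::'a::chilbert) v)"
proof (rule bounded_linear_intro[where K="norm x"])
  show "cinner x (a + b) = cinner x a + cinner x b" for a b by (rule cinner_add_right)
  show "cinner x (r *\<^sub>R a) = r *\<^sub>R cinner x a" for r a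
    by (simp add: scaleR_scaleC cinner_scaleC_right scaleR_conv_of_real)
  show "norm (cinner x a) \<le> norm a * norm x" for a using cauchy_schwarz[of x a] by (simp add: mult.commute)
qed

lemma sqrt_pos:
  assumes c: "contr X" and s: "selfadj X"
  shows "Im (cinner x (sqrt_ser X x)) = 0 \<and> 0 \<le> Re (cinner x (sqrt_ser X x))"
proof -
  define r where "r k = Re (cinner x ((X ^^ k) x))" for k
  have im: "Im (cinner x ((X ^^ k) x)) = 0" for k
  proof -
    have "cinner x ((X ^^ k) x) = cnj (cinner x ((X ^^ k) x))"
      by (metis funpow_selfadj[OF s] cinner_commute)
    then show ?thesis by (metis cnj.simps(2) complex_cnj_cnj equation_minus_iff neg_equal_zero)
  qed
  have ip: "cinner x (psum X n x) = complex_of_real (\<Sum>k<n. sqc k * r k)" for n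
  proof -
    have "cinner x (psum X n x) = (\<Sum>k<n. complex_of_real (sqc k) * cinner x ((X ^^ k) x))"
      unfolding psum_def by (simp add: cinner_sum_right scaleR_scaleC cinner_scaleC_right)
    also have "\<dots> = (\<Sum>k<n. complex_of_real (sqc k * r k))"
      by (intro sum.cong refl) (simp add: r_def complex_eq_iff im)
    finally show ?thesis by simp
  qed
  have rle: "r k \<le> (norm x)\<^sup>2" for k
  proof -
    have "r k \<le> cmod (cinner x ((X ^^ k) x))" unfolding r_def by (rule complex_Re_le_cmod)
    also have "\<dots> \<le> norm x * norm ((X ^^ k) x)" by (rule cauchy_schwarz)
    also have "\<dots> \<le> norm x * norm x" by (intro mult_left_mono funpow_contr[OF c]) simp
    finally show ?thesis by (simp add: power2_eq_square)
  qed
  have r0: "r 0 = (norm x)\<^sup>2" by (simp add: r_def cinner_self_real)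
  have pos: "0 \<le> (\<Sum>k<n. sqc k * r k)" for n
  proof -
    have "(\<Sum>k<n. sqc k * (norm x)\<^sup>2) \<le> (\<Sum>k<n. sqc k * r k)"
    proof (intro sum_mono)
      fix k assume "k \<in> {..<n}"
      show "sqc k * (norm x)\<^sup>2 \<le> sqc k * r k"
      proof (cases "k = 0")
        case False then have "sqc k \<le> 0" by (intro sqc_nonpos) simp
        then show ?thesis using rle[of k] by (simp add: mult_left_mono_neg)
      qed (simp add: r0)
    qed
    moreover have "0 \<le> (\<Sum>k<n. sqc k)"
    proof (cases n)
      case (Suc m) then show ?thesis using sqc_psum_nonneg[of m] by (simp add: lessThan_Suc_atMost)
    qed simp
    then have "0 \<le> (\<Sum>k<n. sqc k) * (norm x)\<^sup>2" by simp
    moreover have "(\<Sum>k<n. sqc k) * (norm x)\<^sup>2 = (\<Sum>k<n. sqc k * (norm x)\<^sup>2)" by (rule sum_distrib_right)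
    ultimately show ?thesis by linarith
  qed
  have lim: "(\<lambda>n. cinner x (psum X n x)) \<longlonglongrightarrow> cinner x (sqrt_ser X x)"
    by (rule bounded_linear.tendsto[OF bl_cinner_right psum_tendsto[OF c]])
  have "(\<lambda>n. Im (cinner x (psum X n x))) \<longlonglongrightarrow> Im (cinner x (sqrt_ser X x))" by (intro tendsto_intros lim)
  then have "(\<lambda>n. 0) \<longlonglongrightarrow> Im (cinner x (sqrt_ser X x))" by (simp add: ip)
  then have "Im (cinner x (sqrt_ser X x)) = 0" using LIMSEQ_const_iff by metis
  moreover have "0 \<le> Re (cinner x (sqrt_ser X x))"
  proof (rule LIMSEQ_le_const)
    show "(\<lambda>n. Re (cinner x (psum X n x))) \<longlonglongrightarrow> Re (cinner x (sqrt_ser X x))" by (intro tendsto_intros lim)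
    show "\<exists>N. \<forall>n\<ge>N. 0 \<le> Re (cinner x (psum X n x))" using pos by (simp add: ip)
  qed
  ultimately show ?thesis by simp
qed


lemma polar_zero:
  assumes Q: "bounded_clinear Q" and z: "\<And>x. cinner x (Q x) = 0"
  shows "Q y = (0::'a::chilbert)"
proof -
  have a: "cinner x (Q y) + cinner y (Q x) = 0" for x y
  proof -
    have "cinner y (Q x) + cinner x (Q y) = 0"
      using z[of "x + y"] z[of x] z[of y] by (simp add: bclin_add[OF Q] cinner_add_left cinner_add_right)
    then show ?thesis by (simp add: add.commute)
  qed
  have b: "cinner x (Q y) - cinner y (Q x) = 0" for x y
  proof -
    have "cinner x (Q (\<i> *\<^sub>C y)) + cinner (\<i> *\<^sub>C y) (Q x) = 0" by (rule a)
    then have "\<i> * (cinner x (Q y) - cinner y (Q x)) = 0"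
      by (simp add: bclin_scaleC[OF Q] cinner_scaleC_left cinner_scaleC_right algebra_simps)
    then show ?thesis by simp
  qed
  have "cinner x (Q y) = 0" for x
  proof -
    have "2 * cinner x (Q y) = (cinner x (Q y) + cinner y (Q x)) + (cinner x (Q y) - cinner y (Q x))"
      by (simp add: algebra_simps)
    then show ?thesis by (simp only: a b) simp
  qed
  from this[of "Q y"] show ?thesis by (simp add: cinner_self_eq_0)
qed

lemma pos_selfadj:
  assumes R: "positive_op R"
  shows "cinner (R x) y = cinner x (R (y::'a::chilbert))"
proof -
  have Rb: "bounded_clinear R" using R by (simp add: positive_op_def)
  define Q where "Q = (\<lambda>x. R x - adjoint R x)"
  have Qb: "bounded_clinear Q" unfolding Q_def by (intro bclin_diff_op Rb adjoint_bclin)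
  have "cinner x (Q x) = 0" for x
  proof -
    have im: "Im (cinner x (R x)) = 0" using R by (simp add: positive_op_def)
    have "cinner x (Q x) = cinner x (R x) - cnj (cinner x (R x))"
      unfolding Q_def by (simp add: cinner_diff_right adjoint_prop[OF Rb, symmetric] flip: cinner_commute)
    then show ?thesis using im by (simp add: complex_eq_iff)
  qed
  then have "Q z = 0" for z by (rule polar_zero[OF Qb])
  then have e: "adjoint R z = R z" for z by (simp add: Q_def)
  have "cinner (R x) y = cinner x (adjoint R y)" by (rule adjoint_prop[OF Rb])
  then show ?thesis by (simp only: e)
qed

lemma selfadj_sqrt:
  assumes c: "contr X" and s: "selfadj X"
  shows "positive_op (sqrt_ser X)"
  unfolding positive_op_def using sqrt_bclin[OF c] sqrt_pos[OF c s] by blast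

lemma sqrt_unique:
  assumes c: "contr X" and s: "selfadj X"
    and S: "positive_op S" and SS: "S \<circ> S = (\<lambda>x. x - X x)"
  shows "S = sqrt_ser X"
proof -
  define R where "R = sqrt_ser X"
  have Rp: "positive_op R" unfolding R_def by (rule selfadj_sqrt[OF c s])
  have Rb: "bounded_clinear R" using Rp by (simp add: positive_op_def)
  have Sb: "bounded_clinear S" using S by (simp add: positive_op_def)
  have SSx: "S (S y) = y - X y" for y
  proof -
    have "(S \<circ> S) y = y - X y" by (simp only: SS)
    then show ?thesis by simp
  qed
  have RRx: "R (R y) = y - X y" for y unfolding R_def by (rule sqrt_sq[OF c])
  have Xy: "X y = y - S (S y)" for y using SSx[of y] by simp
  have SX: "S (X y) = X (S y)" for y
    unfolding Xy[of y] Xy[of "S y"] by (rule bclin_diff[OF Sb])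
  have SR: "S (R y) = R (S y)" for y unfolding R_def by (rule sqrt_intertwine[OF Sb c c SX])
  define T where "T = (\<lambda>x. R x - S x)"
  have Tb: "bounded_clinear T" unfolding T_def by (intro bclin_diff_op Rb Sb)
  have Ts: "cinner (T x) y = cinner x (T y)" for x y
    unfolding T_def by (simp add: cinner_diff_left cinner_diff_right pos_selfadj[OF Rp] pos_selfadj[OF S])
  have sumz: "S (T x) = - R (T x)" for x
  proof -
    have "R (T x) + S (T x) = R (R x) - R (S x) + S (R x) - S (S x)"
      unfolding T_def by (simp add: bclin_diff[OF Rb] bclin_diff[OF Sb])
    also have "\<dots> = 0" by (simp add: RRx SSx SR)
    finally show ?thesis by (simp add: add_eq_0_iff)
  qed
  have form0: "cinner (T x) (R (T x)) = 0" for x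
  proof -
    have r1: "Im (cinner (T x) (R (T x))) = 0 \<and> 0 \<le> Re (cinner (T x) (R (T x)))"
      using Rp by (simp add: positive_op_def)
    have r2: "0 \<le> Re (cinner (T x) (S (T x)))" using S by (simp add: positive_op_def)
    then have "Re (cinner (T x) (R (T x))) \<le> 0" by (simp add: sumz cinner_minus_right)
    with r1 show ?thesis by (simp add: complex_eq_iff)
  qed
  have Q1: "T (R (T x)) = 0" for x
  proof (rule polar_zero[of "\<lambda>x. T (R (T x))"])
    show "bounded_clinear (\<lambda>x. T (R (T x)))" by (rule bclin_comp'[OF Tb bclin_comp'[OF Rb Tb]])
    show "cinner y (T (R (T y))) = 0" for y
      using Ts[of y "R (T y)", symmetric] form0[of y] by simp
  qed
  have Q2: "T (S (T x)) = 0" for x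
  proof (rule polar_zero[of "\<lambda>x. T (S (T x))"])
    show "bounded_clinear (\<lambda>x. T (S (T x)))" by (rule bclin_comp'[OF Tb bclin_comp'[OF Sb Tb]])
    show "cinner y (T (S (T y))) = 0" for y
      using Ts[of y "S (T y)", symmetric] form0[of y] by (simp add: sumz cinner_minus_right)
  qed
  have T3: "T (T (T x)) = 0" for x
  proof -
    have "T (T x) = R (T x) - S (T x)" by (simp add: T_def)
    then have "T (T (T x)) = T (R (T x)) - T (S (T x))" by (simp add: bclin_diff[OF Tb])
    then show ?thesis by (simp add: Q1 Q2)
  qed
  have T2: "T (T x) = 0" for x
  proof -
    have "cinner (T (T x)) (T (T x)) = cinner (T x) (T (T (T x)))" by (rule Ts)
    then show ?thesis by (simp add: T3 cinner_self_eq_0)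
  qed
  have "T x = 0" for x
  proof -
    have "cinner (T x) (T x) = cinner x (T (T x))" by (rule Ts)
    then show ?thesis by (simp add: T2 cinner_self_eq_0)
  qed
  then show ?thesis unfolding R_def[symmetric] by (intro ext) (simp add: T_def)
qed

lemma op_sqrt_eq:
  assumes c: "contr X" and s: "selfadj X"
  shows "op_sqrt (\<lambda>x. x - X x) = sqrt_ser X"
  unfolding op_sqrt_def
proof (rule the_equality)
  show "positive_op (sqrt_ser X) \<and> sqrt_ser X \<circ> sqrt_ser X = (\<lambda>x. x - X x)"
    using selfadj_sqrt[OF c s] sqrt_sq[OF c] by (auto simp: comp_def)
  show "R = sqrt_ser X" if "positive_op R \<and> R \<circ> R = (\<lambda>x. x - X x)" for R
    using sqrt_unique[OF c s] that by blast
qed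


lemma closure_range_diff:
  assumes D: "bounded_clinear D" and a: "a \<in> closure (range D)" and b: "b \<in> closure (range D)"
  shows "a - b \<in> closure (range D)"
proof -
  have "\<exists>g. (\<forall>n. g n \<in> range D) \<and> g \<longlonglongrightarrow> a" using a by (simp only: closure_sequential)
  then obtain ga where ga: "\<And>n. ga n \<in> range D" "ga \<longlonglongrightarrow> a" by blast
  have "\<exists>g. (\<forall>n. g n \<in> range D) \<and> g \<longlonglongrightarrow> b" using b by (simp only: closure_sequential)
  then obtain gb where gb: "\<And>n. gb n \<in> range D" "gb \<longlonglongrightarrow> b" by blast
  have "\<And>n. ga n - gb n \<in> range D"
  proof -
    fix n
    obtain x y where "ga n = D x" "gb n = D y" using ga(1)[of n] gb(1)[of n] by blast
    then have "ga n - gb n = D (x - y)" by (simp add: bclin_diff[OF D])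
    then show "ga n - gb n \<in> range D" by simp
  qed
  moreover have "(\<lambda>n. ga n - gb n) \<longlonglongrightarrow> a - b" by (intro tendsto_intros ga(2) gb(2))
  ultimately have "(\<forall>n. (\<lambda>n. ga n - gb n) n \<in> range D) \<and> (\<lambda>n. ga n - gb n) \<longlonglongrightarrow> a - b"
    by (simp only: simp_thms)
  then have "\<exists>g. (\<forall>n. g n \<in> range D) \<and> g \<longlonglongrightarrow> a - b"
    by (intro exI[where x="\<lambda>n. ga n - gb n"])
  then show ?thesis by (simp only: closure_sequential)
qed

lemma image_closure_range:
  assumes P: "bounded_clinear P" and sub: "\<And>x. P (D1 x) \<in> range D2"
  shows "P ` closure (range D1) \<subseteq> closure (range D2)"
proof (rule image_closure_subset)
  show "continuous_on (closure (range D1)) P"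
    by (rule linear_continuous_on[OF bclin_bl[OF P]])
  show "P ` range D1 \<subseteq> closure (range D2)" using sub closure_subset by blast
qed simp

lemma op_on_tendsto:
  assumes F: "op_on D F" and Dd: "\<And>a b. a \<in> D \<Longrightarrow> b \<in> D \<Longrightarrow> a - b \<in> D"
    and g: "\<And>n. g n \<in> D" and x: "x \<in> D" and lim: "g \<longlonglongrightarrow> x"
  shows "(\<lambda>n. F (g n)) \<longlonglongrightarrow> F x"
proof -
  obtain K where K: "\<And>y. y \<in> D \<Longrightarrow> norm (F y) \<le> K * norm y"
    using F unfolding op_on_def by blast
  have add: "F (a + b) = F a + F b" if "a \<in> D" "b \<in> D" for a b
    using F that unfolding op_on_def by blast
  have eq: "F (g n) - F x = F (g n - x)" for n
  proof -
    have "F (g n) = F ((g n - x) + x)" by simp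
    also have "\<dots> = F (g n - x) + F x" by (rule add[OF Dd[OF g x] x])
    finally show ?thesis by simp
  qed
  have "(\<lambda>n. F (g n) - F x) \<longlonglongrightarrow> 0"
  proof (rule Lim_null_comparison)
    show "\<forall>\<^sub>F n in sequentially. norm (F (g n) - F x) \<le> K * norm (g n - x)"
      using K[OF Dd[OF g x]] by (simp add: eq)
    have "(\<lambda>n. g n - x) \<longlonglongrightarrow> 0" using lim by (simp add: LIM_zero_iff)
    then have "(\<lambda>n. norm (g n - x)) \<longlonglongrightarrow> 0" by (rule tendsto_norm_zero)
    then show "(\<lambda>n. K * norm (g n - x)) \<longlonglongrightarrow> 0" using tendsto_mult[OF tendsto_const, of _ 0 _ K] by simp
  qed
  then show ?thesis by (simp add: LIM_zero_iff)
qed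

lemma cinner_tendsto_left: "f \<longlonglongrightarrow> l \<Longrightarrow> (\<lambda>n. cinner (f n) y) \<longlonglongrightarrow> cinner l (y::'a::chilbert)"
proof -
  assume "f \<longlonglongrightarrow> l"
  then have "(\<lambda>n. cinner y (f n)) \<longlonglongrightarrow> cinner y l" by (rule bounded_linear.tendsto[OF bl_cinner_right])
  then have "(\<lambda>n. cnj (cinner y (f n))) \<longlonglongrightarrow> cnj (cinner y l)" by (rule tendsto_cnj)
  moreover have e: "\<And>z. cnj (cinner y z) = cinner z y" by (rule cinner_commute[symmetric])
  ultimately show ?thesis by (simp only: e)
qed

lemma cinner_tendsto_right: "f \<longlonglongrightarrow> l \<Longrightarrow> (\<lambda>n. cinner y (f n)) \<longlonglongrightarrow> cinner y (l::'a::chilbert)"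
  by (rule bounded_linear.tendsto[OF bl_cinner_right])

lemma closure_zero:
  assumes x: "(x::'a::chilbert) \<in> closure S" and z: "\<And>s. s \<in> S \<Longrightarrow> f s = (0::complex)"
    and c: "\<And>g. (\<And>n. g n \<in> S) \<Longrightarrow> g \<longlonglongrightarrow> x \<Longrightarrow> (\<lambda>n. f (g n)) \<longlonglongrightarrow> f x"
  shows "f x = 0"
proof -
  have "\<exists>g. (\<forall>n. g n \<in> S) \<and> g \<longlonglongrightarrow> x" using x by (simp only: closure_sequential)
  then obtain g where g: "\<And>n. g n \<in> S" "g \<longlonglongrightarrow> x" by blast
  have "(\<lambda>n. f (g n)) \<longlonglongrightarrow> f x" by (rule c[OF g])
  then have "(\<lambda>n. 0) \<longlonglongrightarrow> f x" by (simp add: z g(1))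
  then show ?thesis using LIMSEQ_const_iff by metis
qed

lemma key_range:
  assumes P: "bounded_clinear P" and Si: "bounded_clinear Si" and Sj: "bounded_clinear Sj"
    and com: "\<And>y. Si (P y) = P (Si y)"
    and D2s: "\<And>a b. cinner (D2 a) b = cinner a (D2 b)"
    and tw: "\<And>y. D2 (P y) = P (D1 y)"
    and Aeq: "\<And>x. Si x - adjoint Sj (P x) = D1 (Ai (D1 x))"
    and Beq: "\<And>w. adjoint Si w - Sj (adjoint P w) = D2 (Bi (D2 w))"
  shows "cinner (P (Ai (D1 x))) (D2 w) = cinner (P (D1 x)) (Bi (D2 w))"
proof -
  have "cinner (P (Ai (D1 x))) (D2 w) = cinner (D2 (P (Ai (D1 x)))) w" by (simp add: D2s)
  also have "\<dots> = cinner (P (Si x - adjoint Sj (P x))) w" by (simp add: tw Aeq)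
  also have "\<dots> = cinner (Si (P x)) w - cinner (P (adjoint Sj (P x))) w"
    by (simp add: bclin_diff[OF P] com cinner_diff_left)
  also have "\<dots> = cinner (P x) (adjoint Si w) - cinner (P x) (Sj (adjoint P w))"
    by (simp add: adjoint_prop[OF Si] adjoint_prop[OF P] adjoint_prop2[OF Sj])
  also have "\<dots> = cinner (P x) (D2 (Bi (D2 w)))" by (simp add: cinner_diff_right[symmetric] Beq)
  also have "\<dots> = cinner (P (D1 x)) (Bi (D2 w))" by (simp add: D2s[symmetric] tw)
  finally show ?thesis .
qed

lemma key_closure:
  assumes P: "bounded_clinear P" and D1: "bounded_clinear D1" and D2: "bounded_clinear D2"
    and Ai: "op_on (closure (range D1)) Ai" and Bi: "op_on (closure (range D2)) Bi"
    and kr: "\<And>x w. cinner (P (Ai (D1 x))) (D2 w) = cinner (P (D1 x)) (Bi (D2 w))"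
    and u: "u \<in> closure (range D1)" and v: "v \<in> closure (range D2)"
  shows "cinner (P (Ai u)) v = cinner (P u) (Bi v)"
proof -
  let ?D1 = "closure (range D1)" and ?D2 = "closure (range D2)"
  have step1: "cinner (P (Ai u')) (D2 w) = cinner (P u') (Bi (D2 w))" if u': "u' \<in> ?D1" for u' w
  proof -
    have "(\<lambda>u'. cinner (P (Ai u')) (D2 w) - cinner (P u') (Bi (D2 w))) u' = 0"
    proof (rule closure_zero[OF u'])
      show "cinner (P (Ai s)) (D2 w) - cinner (P s) (Bi (D2 w)) = 0" if "s \<in> range D1" for s
        using that kr by auto
      fix g assume g: "\<And>n. g n \<in> range D1" "g \<longlonglongrightarrow> u'"
      have gD: "g n \<in> ?D1" for n using g(1) closure_subset by blast
      have "(\<lambda>n. Ai (g n)) \<longlonglongrightarrow> Ai u'"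
        by (rule op_on_tendsto[OF Ai closure_range_diff[OF D1] gD u' g(2)])
      then have t1: "(\<lambda>n. P (Ai (g n))) \<longlonglongrightarrow> P (Ai u')" by (rule bclin_continuous[OF P])
      have t2: "(\<lambda>n. P (g n)) \<longlonglongrightarrow> P u'" by (rule bclin_continuous[OF P g(2)])
      show "(\<lambda>n. cinner (P (Ai (g n))) (D2 w) - cinner (P (g n)) (Bi (D2 w))) \<longlonglongrightarrow>
            cinner (P (Ai u')) (D2 w) - cinner (P u') (Bi (D2 w))"
        by (intro tendsto_diff cinner_tendsto_left t1 t2)
    qed
    then show ?thesis by simp
  qed
  have "(\<lambda>v. cinner (P (Ai u)) v - cinner (P u) (Bi v)) v = 0"
  proof (rule closure_zero[OF v])
    show "cinner (P (Ai u)) s - cinner (P u) (Bi s) = 0" if "s \<in> range D2" for s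
      using that step1[OF u] by auto
    fix g assume g: "\<And>n. g n \<in> range D2" "g \<longlonglongrightarrow> v"
    have gD: "g n \<in> ?D2" for n using g(1) closure_subset by blast
    have "(\<lambda>n. Bi (g n)) \<longlonglongrightarrow> Bi v"
      by (rule op_on_tendsto[OF Bi closure_range_diff[OF D2] gD v g(2)])
    then show "(\<lambda>n. cinner (P (Ai u)) (g n) - cinner (P u) (Bi (g n))) \<longlonglongrightarrow>
          cinner (P (Ai u)) v - cinner (P u) (Bi v)"
      by (intro tendsto_diff cinner_tendsto_right g(2))
  qed
  then show ?thesis by simp
qed


lemma foldr_id: "(\<forall>i\<in>set xs. e i = 0) \<Longrightarrow> foldr (\<lambda>i acc. (S i ^^ e i) \<circ> acc) xs a = a"
  by (induction xs) auto

lemma esym_nn_bound: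
  assumes z: "\<forall>j\<in>{1..n}. cmod (z j) \<le> 1"
  shows "cmod (esym n n z) \<le> 1"
proof -
  have "{K. K \<subseteq> {1..n} \<and> card K = n} = {{1..n}}"
  proof
    show "{K. K \<subseteq> {1..n} \<and> card K = n} \<subseteq> {{1..n}}"
    proof
      fix K assume "K \<in> {K. K \<subseteq> {1..n} \<and> card K = n}"
      then have K: "K \<subseteq> {1..n}" "card K = n" by auto
      then have "K = {1..n}" by (intro card_subset_eq) auto
      then show "K \<in> {{1..n}}" by simp
    qed
  qed auto
  then have "esym n n z = (\<Prod>j\<in>{1..n}. z j)" by (simp add: esym_def)
  then have "cmod (esym n n z) \<le> (\<Prod>j\<in>{1..n}. cmod (z j))" by (simp add: norm_prod_le)
  also have "\<dots> \<le> 1" using z by (intro prod_le_1) auto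
  finally show ?thesis .
qed

lemma gamma_contr:
  assumes G: "Gamma_contraction n S P" and n: "n \<ge> 1"
  shows "norm (P x) \<le> norm x"
proof -
  define e where "e = (\<lambda>i::nat. if i = n then 1 else (0::nat))"
  define c where "c = (\<lambda>\<alpha>. if \<alpha> = e then (1::complex) else 0)"
  have sup: "{\<alpha>. c \<alpha> \<noteq> 0} = {e}" by (auto simp: c_def)
  have ip: "is_poly n c" unfolding is_poly_def using n by (auto simp: e_def c_def)
  have om: "op_monomial n S P e = P"
  proof -
    have "foldr (\<lambda>i acc. (S i ^^ e i) \<circ> acc) [1..<n] (P ^^ e n) = P ^^ e n"
      by (rule foldr_id) (auto simp: e_def)
    then show ?thesis by (simp add: op_monomial_def e_def)
  qed
  have po: "poly_op n c S P = P" by (rule ext) (simp add: poly_op_def sup c_def om scaleC_one)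
  have pe: "poly_eval n c s p = p" for s p
  proof -
    have "(\<Prod>i\<in>{1..n-1}. s i ^ e i) = 1" by (intro prod.neutral) (auto simp: e_def)
    then show ?thesis by (simp add: poly_eval_def sup c_def e_def)
  qed
  have Gne: "Gamma n \<noteq> {}"
  proof -
    let ?z = "\<lambda>_::nat. 0::complex"
    have "((\<lambda>i. if i \<in> {1..n-1} then esym n i ?z else 0), esym n n ?z) \<in> Gamma n"
      unfolding Gamma_def by auto
    then show ?thesis by blast
  qed
  have "(SUP sp\<in>Gamma n. cmod (poly_eval n c (fst sp) (snd sp))) \<le> 1"
  proof (rule cSUP_least[OF Gne])
    fix sp assume "sp \<in> Gamma n"
    then obtain z where sp: "snd sp = esym n n z" and z: "\<forall>j\<in>{1..n}. cmod (z j) \<le> 1"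
      unfolding Gamma_def by auto
    show "cmod (poly_eval n c (fst sp) (snd sp)) \<le> 1" using esym_nn_bound[OF z] by (simp add: pe sp)
  qed
  moreover have "onorm (poly_op n c S P) \<le> (SUP sp\<in>Gamma n. cmod (poly_eval n c (fst sp) (snd sp)))"
    using G ip unfolding Gamma_contraction_def by blast
  ultimately have on: "onorm P \<le> 1" using po by simp
  have "bounded_clinear P" using G by (simp add: Gamma_contraction_def commuting_tuple_def)
  then have "norm (P x) \<le> onorm P * norm x" by (intro onorm bclin_bl)
  also have "\<dots> \<le> 1 * norm x" using on by (intro mult_right_mono) simp_all
  finally show ?thesis by simp
qed


lemma adjoint_contr:
  assumes T: "bounded_clinear (T::'a::chilbert \<Rightarrow> 'a)" and c: "\<And>x. norm (T x) \<le> norm x"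
  shows "norm (adjoint T y) \<le> norm y"
proof -
  let ?G = "adjoint T"
  have "(norm (?G y))\<^sup>2 = Re (cinner (?G y) (?G y))" by (simp add: cinner_self_real)
  also have "\<dots> = Re (cinner (T (?G y)) y)" by (simp add: adjoint_prop[OF T])
  also have "\<dots> \<le> cmod (cinner (T (?G y)) y)" by (rule complex_Re_le_cmod)
  also have "\<dots> \<le> norm (T (?G y)) * norm y" by (rule cauchy_schwarz)
  also have "\<dots> \<le> norm (?G y) * norm y" using c by (simp add: mult_right_mono)
  finally have "norm (?G y) * norm (?G y) \<le> norm (?G y) * norm y"
    by (simp add: power2_eq_square)
  then show ?thesis by (cases "?G y = 0") (auto simp: mult_le_cancel_left)
qed

lemma final_equiv:
  fixes P Q :: "'a::chilbert \<Rightarrow> 'a" and A B :: "nat \<Rightarrow> 'a \<Rightarrow> 'a"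
  assumes Pb: "bounded_clinear P" and Qb: "bounded_clinear Q"
    and QP: "\<And>x. Q (P x) = x" and PQ: "\<And>x. P (Q x) = x"
    and opA: "\<And>i. i \<in> I \<Longrightarrow> op_on DS1 (A i)" and opB: "\<And>i. i \<in> I \<Longrightarrow> op_on DS2 (B i)"
    and d1: "\<And>a b. a \<in> DS1 \<Longrightarrow> b \<in> DS1 \<Longrightarrow> a - b \<in> DS1"
    and d2: "\<And>a b. a \<in> DS2 \<Longrightarrow> b \<in> DS2 \<Longrightarrow> a - b \<in> DS2"
    and PD: "\<And>u. u \<in> DS1 \<Longrightarrow> P u \<in> DS2" and QD: "\<And>v. v \<in> DS2 \<Longrightarrow> Q v \<in> DS1"
    and key: "\<And>i u v. i \<in> I \<Longrightarrow> u \<in> DS1 \<Longrightarrow> v \<in> DS2 \<Longrightarrow> cinner (P (A i u)) v = cinner (P u) (B i v)"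
    and I: "\<And>i. i \<in> I \<Longrightarrow> n - i \<in> I"
  shows "(\<forall>i\<in>I. commute_on DS1 (A i) (A (n - i))) \<longleftrightarrow> (\<forall>i\<in>I. commute_on DS2 (B i) (B (n - i)))"
proof
  have Ain: "A i u \<in> DS1" if "i \<in> I" "u \<in> DS1" for i u using opA[OF that(1)] that(2) by (simp add: op_on_def)
  have Bin: "B i v \<in> DS2" if "i \<in> I" "v \<in> DS2" for i v using opB[OF that(1)] that(2) by (simp add: op_on_def)
  {
    assume HA: "\<forall>i\<in>I. commute_on DS1 (A i) (A (n - i))"
    show "\<forall>i\<in>I. commute_on DS2 (B i) (B (n - i))"
    proof (intro ballI, unfold commute_on_def, intro ballI)
      fix i v assume i: "i \<in> I" and v: "v \<in> DS2"
      define j where "j = n - i"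
      have j: "j \<in> I" using I[OF i] by (simp add: j_def)
      define w where "w = B i (B j v) - B j (B i v)"
      have wD: "w \<in> DS2" unfolding w_def by (intro d2 Bin i j v)
      have orth: "cinner (P u) w = 0" if u: "u \<in> DS1" for u
      proof -
        have e1: "cinner (P u) (B i (B j v)) = cinner (P (A j (A i u))) v"
          using key[OF i u Bin[OF j v]] key[OF j Ain[OF i u] v] by simp
        have e2: "cinner (P u) (B j (B i v)) = cinner (P (A i (A j u))) v"
          using key[OF j u Bin[OF i v]] key[OF i Ain[OF j u] v] by simp
        have "A i (A j u) = A j (A i u)" using HA i u unfolding commute_on_def j_def by blast
        then show ?thesis unfolding w_def by (simp add: cinner_diff_right e1 e2)
      qed
      have "cinner w w = 0" using orth[OF QD[OF wD]] by (simp add: PQ)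
      then show "B i (B (n - i) v) = B (n - i) (B i v)" by (simp add: cinner_self_eq_0 w_def j_def)
    qed
  }
  {
    assume HB: "\<forall>i\<in>I. commute_on DS2 (B i) (B (n - i))"
    show "\<forall>i\<in>I. commute_on DS1 (A i) (A (n - i))"
    proof (intro ballI, unfold commute_on_def, intro ballI)
      fix i u assume i: "i \<in> I" and u: "u \<in> DS1"
      define j where "j = n - i"
      have j: "j \<in> I" using I[OF i] by (simp add: j_def)
      define w where "w = A i (A j u) - A j (A i u)"
      have wD: "P w \<in> DS2" unfolding w_def by (intro PD d1 Ain i j u)
      have orth: "cinner (P w) v = 0" if v: "v \<in> DS2" for v
      proof -
        have e1: "cinner (P (A i (A j u))) v = cinner (P u) (B j (B i v))"
          using key[OF i Ain[OF j u] v] key[OF j u Bin[OF i v]] by simp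
        have e2: "cinner (P (A j (A i u))) v = cinner (P u) (B i (B j v))"
          using key[OF j Ain[OF i u] v] key[OF i u Bin[OF j v]] by simp
        have "B i (B j v) = B j (B i v)" using HB i v unfolding commute_on_def j_def by blast
        then show ?thesis unfolding w_def by (simp add: bclin_diff[OF Pb] cinner_diff_left e1 e2)
      qed
      have "cinner (P w) (P w) = 0" by (rule orth[OF wD])
      then have "P w = 0" by (simp add: cinner_self_eq_0)
      then have "w = 0" using QP[of w] bclin_zero[OF Qb] by simp
      then show "A i (A (n - i) u) = A (n - i) (A i u)" by (simp add: w_def j_def)
    qed
  }
qed


theorem mainTheorem8:
  fixes n :: nat and S :: "nat \<Rightarrow> 'a::chilbert \<Rightarrow> 'a" and P :: "'a \<Rightarrow> 'a"
    and A B :: "nat \<Rightarrow> 'a \<Rightarrow> 'a"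
  assumes "Gamma_contraction n S P"
    and "invertible_op P"
    and "fundamental_tuple n S P A"
    and "fundamental_tuple n (\<lambda>i. adjoint (S i)) (adjoint P) B"
  shows "(\<forall>i\<in>{1..n-1}. commute_on (defect_space P) (A i) (A (n - i))) \<longleftrightarrow>
         (\<forall>i\<in>{1..n-1}. commute_on (defect_space (adjoint P)) (B i) (B (n - i)))"
proof (cases "n \<ge> 2")
  case False
  then have "{1..n-1} = ({}::nat set)" by auto
  then show ?thesis by simp
next
  case True
  note G = assms(1)
  have ct: "commuting_tuple n S P" using G by (simp add: Gamma_contraction_def)
  have Pb: "bounded_clinear P" using ct by (simp add: commuting_tuple_def)
  have Sb: "bounded_clinear (S i)" if "i \<in> {1..n-1}" for i
    using ct that by (simp add: commuting_tuple_def)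
  have SP: "S i (P y) = P (S i y)" if "i \<in> {1..n-1}" for i y
  proof -
    have "S i \<circ> P = P \<circ> S i" using ct that by (simp add: commuting_tuple_def)
    then show ?thesis by (metis comp_apply)
  qed
  have Pc: "norm (P x) \<le> norm x" for x using gamma_contr[OF G] True by simp
  obtain Q where Qb: "bounded_clinear Q" and PQ': "P \<circ> Q = id" and QP': "Q \<circ> P = id"
    using assms(2) unfolding invertible_op_def by blast
  have PQ: "P (Q x) = x" for x using fun_cong[OF PQ', of x] by simp
  have QP: "Q (P x) = x" for x using fun_cong[OF QP', of x] by simp
  define Pa where "Pa = adjoint P"
  have Pab: "bounded_clinear Pa" unfolding Pa_def by (rule adjoint_bclin[OF Pb])
  have Pac: "norm (Pa y) \<le> norm y" for y unfolding Pa_def by (rule adjoint_contr[OF Pb Pc])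
  have PaPa: "adjoint Pa = P" unfolding Pa_def by (rule adjoint_adjoint[OF Pb])
  define X1 where "X1 = (\<lambda>x. Pa (P x))"
  define X2 where "X2 = (\<lambda>x. P (Pa x))"
  have c1: "contr X1" unfolding contr_def X1_def
    using bclin_comp'[OF Pab Pb] Pac Pc order_trans by blast
  have c2: "contr X2" unfolding contr_def X2_def
    using bclin_comp'[OF Pb Pab] Pac Pc order_trans by blast
  have s1: "selfadj X1" unfolding selfadj_def X1_def Pa_def
    by (simp add: adjoint_prop2[OF Pb] adjoint_prop[OF Pb])
  have s2: "selfadj X2" unfolding selfadj_def X2_def Pa_def
    by (simp add: adjoint_prop2[OF Pb] adjoint_prop[OF Pb])
  define D1 where "D1 = sqrt_ser X1"
  define D2 where "D2 = sqrt_ser X2"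
  have dP: "defect_op P = D1"
  proof -
    have "op_sqrt (\<lambda>x. x - X1 x) = sqrt_ser X1" by (rule op_sqrt_eq[OF c1 s1])
    then show ?thesis by (simp add: defect_op_def X1_def Pa_def D1_def)
  qed
  have dPa: "defect_op Pa = D2"
  proof -
    have "op_sqrt (\<lambda>x. x - X2 x) = sqrt_ser X2" by (rule op_sqrt_eq[OF c2 s2])
    then show ?thesis by (simp add: defect_op_def X2_def PaPa D2_def)
  qed
  have D1b: "bounded_clinear D1" unfolding D1_def by (rule sqrt_bclin[OF c1])
  have D2b: "bounded_clinear D2" unfolding D2_def by (rule sqrt_bclin[OF c2])
  have D2s: "cinner (D2 a) b = cinner a (D2 b)" for a b
    unfolding D2_def by (rule pos_selfadj[OF selfadj_sqrt[OF c2 s2]])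
  have tw: "D2 (P y) = P (D1 y)" for y
    unfolding D1_def D2_def by (rule sqrt_intertwine[OF Pb c1 c2, symmetric]) (simp add: X1_def X2_def)
  have twQ: "D1 (Q y) = Q (D2 y)" for y
    unfolding D1_def D2_def by (rule sqrt_intertwine[OF Qb c2 c1, symmetric]) (simp add: X1_def X2_def PQ QP)
  define DS1 where "DS1 = closure (range D1)"
  define DS2 where "DS2 = closure (range D2)"
  have ds1: "defect_space P = DS1" by (simp add: defect_space_def dP DS1_def)
  have ds2: "defect_space (adjoint P) = DS2" by (simp add: defect_space_def dPa[unfolded Pa_def] DS2_def)
  have PD: "P ` DS1 \<subseteq> DS2" unfolding DS1_def DS2_def
    by (rule image_closure_range[OF Pb]) (simp add: tw[symmetric])
  have QD: "Q ` DS2 \<subseteq> DS1" unfolding DS1_def DS2_def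
    by (rule image_closure_range[OF Qb]) (simp add: twQ[symmetric])
  have I: "n - i \<in> {1..n-1}" if "i \<in> {1..n-1}" for i using that True by auto
  have opA: "op_on DS1 (A i)" and Aeq: "S i x - adjoint (S (n - i)) (P x) = D1 (A i (D1 x))"
    if "i \<in> {1..n-1}" for i x
    using assms(3) that unfolding fundamental_tuple_def ds1 dP by blast+
  have opB: "op_on DS2 (B i)"
    and Beq: "adjoint (S i) x - adjoint (adjoint (S (n - i))) (Pa x) = D2 (B i (D2 x))"
    if "i \<in> {1..n-1}" for i x
    using assms(4) that unfolding fundamental_tuple_def ds2 dPa[unfolded Pa_def] Pa_def by auto
  have key: "cinner (P (A i u)) v = cinner (P u) (B i v)"
    if i: "i \<in> {1..n-1}" and u: "u \<in> DS1" and v: "v \<in> DS2" for i u v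
  proof (rule key_closure[OF Pb D1b D2b opA[OF i, unfolded DS1_def] opB[OF i, unfolded DS2_def] _
        u[unfolded DS1_def] v[unfolded DS2_def]])
    fix x w
    have Beq': "adjoint (S i) w' - S (n - i) (adjoint P w') = D2 (B i (D2 w'))" for w'
      using Beq[OF i, of w'] adjoint_adjoint[OF Sb[OF I[OF i]]] by (simp add: Pa_def)
    show "cinner (P (A i (D1 x))) (D2 w) = cinner (P (D1 x)) (B i (D2 w))"
      by (rule key_range[OF Pb Sb[OF i] Sb[OF I[OF i]] SP[OF i] D2s tw Aeq[OF i] Beq'])
  qed
  show ?thesis unfolding ds1 ds2
  proof (rule final_equiv[OF Pb Qb QP PQ opA opB])
    show "a - b \<in> DS1" if "a \<in> DS1" "b \<in> DS1" for a b
      using that unfolding DS1_def by (rule closure_range_diff[OF D1b])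
    show "a - b \<in> DS2" if "a \<in> DS2" "b \<in> DS2" for a b
      using that unfolding DS2_def by (rule closure_range_diff[OF D2b])
  qed (use PD QD key I in auto)
qed


end
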